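(* Let $\mathfrak{R}$ be either $\mathbb{F}_q$ ($q$ a prime power) or $\mathbb{Z}_k$ ($k\ge 2$), with character $\chi$ as in the context. Let $C$ be an $\mathfrak{R}$-linear code of length $n$ and $\bm{w}\in\mathfrak{R}^n$. Then \[ Jac^{av}(C^{\perp},\bm{w}; x_{a} : a \in \mathfrak{R}^{2})=\frac{1}{|C|}\,Jac^{av}\Big(C,\bm{w};\ \sum_{b\in\mathfrak{R}}\chi(a_1 b)\,x_{(b,a_2)} : a=(a_1,a_2)\in\mathfrak{R}^{2}\Big), \] where the right-hand side is $Jac^{av}(C,\bm{w};x_a:a\in\mathfrak{R}^2)$ with each $x_{(a_1,a_2)}$ replaced by $\sum_{b}\chi(a_1b)x_{(b,a_2)}$.
   Context: An $\mathbb{F}_q$-linear code of length $n$ is a subspace of $\mathbb{F}_q^n$; a $\mathbb{Z}_k$-linear code is an additive subgroup of $\mathbb{Z}_k^n$. $C^\perp=\{\bm{v}\in\mathfrak{R}^n : \sum_i u_iv_i=0\ \forall \bm{u}\in C\}$. The character $\chi$: if $\mathfrak{R}=\mathbb{F}_q$, $q=p^f$, fix a root $\lambda$ of a primitive irreducible polynomial of degree $f$ over $\mathbb{F}_p$, write $\alpha=\alpha_0+\alpha_1\lambda+\cdots+\alpha_{f-1}\lambda^{f-1}$ ($\alpha_i\in\mathbb{F}_p$) and set $\chi(\alpha)=\zeta_p^{\alpha_0}$; if $\mathfrak{R}=\mathbb{Z}_k$, $\chi(\alpha)=\zeta_k^{\alpha}$ ($\zeta_m$ a primitive $m$-th root of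 unity). For $a\in\mathfrak{R}^2$, $r_a(\bm{u};\bm{w})=\#\{i:(u_i,w_i)=a\}$, and $Jac(C,\bm{w};x_a:a\in\mathfrak{R}^2)=\sum_{\bm{u}\in C}\prod_{a\in\mathfrak{R}^2}x_a^{r_a(\bm{u};\bm{w})}$. For $\sigma\in S_n$ and $\bm{u}\in\mathfrak{R}^n$, $\bm{u}^\sigma=(u_{\sigma(1)},\dots,u_{\sigma(n)})$ and $C^\sigma=\{\bm{u}^\sigma:\bm{u}\in C\}$. The average Jacobi polynomial is $Jac^{av}(C,\bm{w};x_a:a\in\mathfrak{R}^2)=\frac{1}{n!}\sum_{\sigma\in S_n}Jac(C^\sigma,\bm{w};x_a:a\in\mathfrak{R}^2)$. *)

theory Defs
  imports "HOL-Computational_Algebra.Primes" "HOL-Combinatorics.Permutations"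
    "Berlekamp_Zassenhaus.Finite_Field" Complex_Main
begin

text \<open>Vectors of length n over a ring are lists of length n (coordinates 0..n-1).\<close>

definition vecs :: "nat \<Rightarrow> 'r list set" where
  "vecs n = {u. length u = n}"

definition vadd :: "'r::comm_ring_1 list \<Rightarrow> 'r list \<Rightarrow> 'r list" where
  "vadd u v = map2 (+) u v"

definition vsmult :: "'r::comm_ring_1 \<Rightarrow> 'r list \<Rightarrow> 'r list" where
  "vsmult c u = map (\<lambda>x. c * x) u"

definition linear_code_field :: "nat \<Rightarrow> 'r::field list set \<Rightarrow> bool" where
  "linear_code_field n C \<longleftrightarrow> C \<subseteq> vecs n \<and> replicate n 0 \<in> C \<and>
     (\<forall>u\<in>C. \<forall>v\<in>C. vadd u v \<in> C) \<and> (\<forall>c. \<forall>u\<in>C. vsmult c u \<in> C)"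

text \<open>Z_k-linear code of length n: an additive subgroup of Z_k^n.\<close>
definition additive_code :: "nat \<Rightarrow> 'r::comm_ring_1 list set \<Rightarrow> bool" where
  "additive_code n C \<longleftrightarrow> C \<subseteq> vecs n \<and> replicate n 0 \<in> C \<and>
     (\<forall>u\<in>C. \<forall>v\<in>C. vadd u v \<in> C) \<and> (\<forall>u\<in>C. map uminus u \<in> C)"

definition dual_code :: "nat \<Rightarrow> 'r::comm_ring_1 list set \<Rightarrow> 'r list set" where
  "dual_code n C = {v \<in> vecs n. \<forall>u\<in>C. (\<Sum>i<n. u ! i * v ! i) = 0}"

text \<open>u^sigma = (u_{sigma(1)},...,u_{sigma(n)}), with 0-based indices.\<close>
definition vperm :: "nat \<Rightarrow> (nat \<Rightarrow> nat) \<Rightarrow> 'r list \<Rightarrow> 'r list" where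
  "vperm n \<sigma> u = map (\<lambda>i. u ! \<sigma> i) [0..<n]"

definition code_perm :: "nat \<Rightarrow> (nat \<Rightarrow> nat) \<Rightarrow> 'r list set \<Rightarrow> 'r list set" where
  "code_perm n \<sigma> C = vperm n \<sigma> ` C"

definition r_count :: "nat \<Rightarrow> 'r \<times> 'r \<Rightarrow> 'r list \<Rightarrow> 'r list \<Rightarrow> nat" where
  "r_count n a u w = card {i. i < n \<and> (u ! i, w ! i) = a}"

text \<open>Jacobi polynomial, evaluated at an assignment x of complex values to the
  indeterminates x_a, a in R^2.\<close>
definition jac :: "nat \<Rightarrow> 'r::finite list set \<Rightarrow> 'r list \<Rightarrow> ('r \<times> 'r \<Rightarrow> complex) \<Rightarrow> complex" where
  "jac n C w x = (\<Sum>u\<in>C. \<Prod>a\<in>UNIV. x a ^ r_count n a u w)"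

definition jac_av :: "nat \<Rightarrow> 'r::finite list set \<Rightarrow> 'r list \<Rightarrow> ('r \<times> 'r \<Rightarrow> complex) \<Rightarrow> complex" where
  "jac_av n C w x = (\<Sum>\<sigma> | \<sigma> permutes {..<n}. jac n (code_perm n \<sigma> C) w x) / of_nat (fact n)"

definition subst_chi :: "('r::{finite,comm_ring_1} \<Rightarrow> complex) \<Rightarrow> ('r \<times> 'r \<Rightarrow> complex) \<Rightarrow> 'r \<times> 'r \<Rightarrow> complex" where
  "subst_chi chi x a = (\<Sum>b\<in>UNIV. chi (fst a * b) * x (b, snd a))"

definition primitive_root_of_unity :: "nat \<Rightarrow> complex \<Rightarrow> bool" where
  "primitive_root_of_unity m z \<longleftrightarrow> z ^ m = 1 \<and> (\<forall>j. 0 < j \<and> j < m \<longrightarrow> z ^ j \<noteq> 1)"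

definition ff_degree :: "'a::finite_field itself \<Rightarrow> nat" where
  "ff_degree _ = (THE f. CARD('a) = CHAR('a) ^ f)"

text \<open>lam is a primitive element of F_q (a root of a primitive polynomial over F_p,
  of degree f), i.e. a generator of the multiplicative group.\<close>
definition primitive_element :: "'a::finite_field \<Rightarrow> bool" where
  "primitive_element lam \<longleftrightarrow> (\<forall>x. x \<noteq> 0 \<longrightarrow> (\<exists>i::nat. x = lam ^ i))"

definition ff_coords :: "'a::finite_field \<Rightarrow> 'a \<Rightarrow> nat \<Rightarrow> nat" where
  "ff_coords lam \<alpha> = (THE c. (\<forall>i. c i < CHAR('a)) \<and> (\<forall>i\<ge>ff_degree TYPE('a). c i = 0) \<and>
      \<alpha> = (\<Sum>i<ff_degree TYPE('a). of_nat (c i) * lam ^ i))"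

definition chi_ff :: "'a::finite_field \<Rightarrow> complex \<Rightarrow> 'a \<Rightarrow> complex" where
  "chi_ff lam \<zeta> \<alpha> = \<zeta> ^ ff_coords lam \<alpha> 0"

text \<open>Z_k is modelled by the type 'k mod_ring with k = CARD('k) >= 2.\<close>
definition chi_zk :: "complex \<Rightarrow> 'k::nontriv mod_ring \<Rightarrow> complex" where
  "chi_zk \<zeta> \<alpha> = \<zeta> ^ nat (to_int_mod_ring \<alpha>)"

end

theory Submission
  imports Defs "HOL-Number_Theory.Cong"
begin


lemma finite_vecs[simp]: "finite (vecs n :: 'r::finite list set)"
  unfolding vecs_def using finite_lists_length_eq[of "UNIV::'r set" n] by simp

lemma prod_rcount:
  fixes y :: "'r::finite \<times> 'r \<Rightarrow> complex"
  shows "(\<Prod>a\<in>UNIV. y a ^ r_count n a u w) = (\<Prod>i<n. y (u!i, w!i))"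
proof -
  have "(\<Prod>i<n. y (u!i, w!i)) = (\<Prod>a\<in>UNIV. \<Prod>i\<in>{i. i \<in> {..<n} \<and> (u!i, w!i) = a}. y (u!i, w!i))"
    by (rule prod.group[symmetric]) auto
  also have "\<dots> = (\<Prod>a\<in>UNIV. y a ^ r_count n a u w)"
  proof (rule prod.cong[OF refl])
    fix a
    have "(\<Prod>i\<in>{i. i \<in> {..<n} \<and> (u!i, w!i) = a}. y (u!i, w!i)) = (\<Prod>i\<in>{i. i \<in> {..<n} \<and> (u!i, w!i) = a}. y a)"
      by (rule prod.cong) auto
    also have "\<dots> = y a ^ r_count n a u w" unfolding r_count_def by simp
    finally show "(\<Prod>i\<in>{i. i \<in> {..<n} \<and> (u!i, w!i) = a}. y (u!i, w!i)) = y a ^ r_count n a u w" .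
  qed
  finally show ?thesis by simp
qed

lemma jac_alt: "jac n C w y = (\<Sum>u\<in>C. \<Prod>i<n. y (u!i, w!i))"
  unfolding jac_def prod_rcount by simp

lemma vecs_Suc: "vecs (Suc n) = (\<lambda>(v,b). v @ [b]) ` (vecs n \<times> UNIV)"
proof (intro equalityI subsetI)
  fix u :: "'a list" assume "u \<in> vecs (Suc n)"
  then have "length u = Suc n" by (simp add: vecs_def)
  then have "u = butlast u @ [last u]" "butlast u \<in> vecs n"
    by (auto simp: vecs_def intro!: append_butlast_last_id[symmetric])
  then show "u \<in> (\<lambda>(v,b). v @ [b]) ` (vecs n \<times> UNIV)" by force
qed (auto simp: vecs_def)

lemma prod_sum_vecs:
  fixes f :: "nat \<Rightarrow> 'r::finite \<Rightarrow> complex"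
  shows "(\<Prod>i<n. \<Sum>b\<in>UNIV. f i b) = (\<Sum>v\<in>vecs n. \<Prod>i<n. f i (v!i))"
proof (induction n)
  case 0
  have v0: "vecs 0 = {[]}" by (auto simp: vecs_def)
  show ?case by (simp add: v0)
next
  case (Suc n)
  have inj: "inj_on (\<lambda>(v,b). v @ [b]) (vecs n \<times> (UNIV::'r set))"
    by (auto simp: inj_on_def vecs_def)
  have "(\<Sum>v\<in>vecs (Suc n). \<Prod>i<Suc n. f i (v!i))
      = (\<Sum>(v,b)\<in>vecs n \<times> (UNIV::'r set). \<Prod>i<Suc n. f i ((v@[b])!i))"
    unfolding vecs_Suc by (subst sum.reindex[OF inj]) (simp add: case_prod_unfold)
  also have "\<dots> = (\<Sum>(v,b)\<in>vecs n \<times> UNIV. (\<Prod>i<n. f i (v!i)) * f n b)"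
  proof -
    have h: "(\<Prod>i<Suc n. f i ((v@[b])!i)) = (\<Prod>i<n. f i (v!i)) * f n b" if "v \<in> vecs n" for v :: "'r list" and b
    proof -
      have l: "length v = n" using that by (simp add: vecs_def)
      have "(\<Prod>i<n. f i ((v@[b])!i)) = (\<Prod>i<n. f i (v!i))"
        by (rule prod.cong) (auto simp: l nth_append)
      then show ?thesis by (simp add: l nth_append)
    qed
    show ?thesis by (rule sum.cong[OF refl]) (auto simp del: prod.lessThan_Suc simp: h)
  qed
  also have "\<dots> = (\<Sum>v\<in>vecs n. \<Prod>i<n. f i (v!i)) * (\<Sum>b\<in>UNIV. f n b)"
    by (simp add: sum.cartesian_product[symmetric] sum_product)
  finally show ?case using Suc by simp
qed

lemma chi_sum:
  assumes add: "\<forall>a b. chi (a+b) = chi a * (chi b :: complex)" and z: "chi 0 = 1"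
  shows "finite A \<Longrightarrow> chi (\<Sum>i\<in>A. f i) = (\<Prod>i\<in>A. chi (f i))"
  by (induction A rule: finite_induct) (auto simp: add z)

lemma core:
  fixes chi :: "'r::{finite,comm_ring_1} \<Rightarrow> complex"
  assumes add: "\<forall>a b. chi (a+b) = chi a * chi b" and z: "chi 0 = 1"
  and C: "C \<subseteq> vecs n" "replicate n 0 \<in> C" "\<forall>u\<in>C. \<forall>v\<in>C. vadd u v \<in> C" "\<forall>u\<in>C. map uminus u \<in> C"
  and gen: "\<forall>v\<in>vecs n. v \<notin> dual_code n C \<longrightarrow> (\<exists>u\<in>C. chi (\<Sum>i<n. u!i * v!i) \<noteq> 1)"
  shows "jac n (dual_code n C) w x = jac n C w (subst_chi chi x) / of_nat (card C)"
proof -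
  define ip where "ip u v = (\<Sum>i<n. u!i * v!i)" for u v :: "'r list"
  have finC: "finite C" using C(1) finite_subset finite_vecs by blast
  have cardC: "card C > 0" using finC C(2) card_gt_0_iff by blast
  have orth: "(\<Sum>u\<in>C. chi (ip u v)) = (if v \<in> dual_code n C then of_nat (card C) else 0)"
    if v: "v \<in> vecs n" for v
  proof (cases "v \<in> dual_code n C")
    case True
    then have "\<forall>u\<in>C. ip u v = 0" by (auto simp: dual_code_def ip_def)
    then show ?thesis using True z by simp
  next
    case False
    then obtain u0 where u0: "u0 \<in> C" "chi (ip u0 v) \<noteq> 1" using gen v by (auto simp: ip_def)
    have len: "\<And>u. u \<in> C \<Longrightarrow> length u = n" using C(1) by (auto simp: vecs_def)
    have ipadd: "ip (vadd u0 u) v = ip u0 v + ip u v" if "u \<in> C" for u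
      unfolding ip_def by (simp add: vadd_def len[OF that] len[OF u0(1)] sum.distrib[symmetric] algebra_simps)
    have inj: "inj_on (vadd u0) C"
    proof (rule inj_onI)
      fix a b assume ab: "a \<in> C" "b \<in> C" "vadd u0 a = vadd u0 b"
      show "a = b"
      proof (rule nth_equalityI)
        show "length a = length b" using len ab by simp
        fix i assume "i < length a"
        have i: "i < n" using \<open>i < length a\<close> len ab by simp
        have "(vadd u0 a)!i = (vadd u0 b)!i" using ab by simp
        moreover have "(vadd u0 a)!i = u0!i + a!i" "(vadd u0 b)!i = u0!i + b!i"
          using i len ab(1,2) u0(1) by (simp_all add: vadd_def)
        ultimately show "a!i = b!i" by simp
      qed
    qed
    have img: "vadd u0 ` C = C"
    proof
      show "vadd u0 ` C \<subseteq> C" using C(3) u0 by auto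
      show "C \<subseteq> vadd u0 ` C"
      proof
        fix u assume u: "u \<in> C"
        have m: "map uminus u0 \<in> C" using C(4) u0 by auto
        have "vadd u0 (vadd (map uminus u0) u) = u"
          by (rule nth_equalityI) (auto simp: vadd_def len[OF u] len[OF u0(1)])
        then show "u \<in> vadd u0 ` C" using C(3) m u by (metis image_eqI)
      qed
    qed
    define S where "S = (\<Sum>u\<in>C. chi (ip u v))"
    have "S = (\<Sum>u\<in>vadd u0 ` C. chi (ip u v))" unfolding S_def img ..
    also have "\<dots> = (\<Sum>u\<in>C. chi (ip (vadd u0 u) v))" by (simp add: sum.reindex[OF inj])
    also have "\<dots> = (\<Sum>u\<in>C. chi (ip u0 v) * chi (ip u v))"
      by (rule sum.cong) (auto simp: ipadd add)
    also have "\<dots> = chi (ip u0 v) * S" by (simp add: S_def sum_distrib_left)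
    finally have "(1 - chi (ip u0 v)) * S = 0" by (simp add: algebra_simps)
    then have "S = 0" using u0 by simp
    then show ?thesis using False S_def by simp
  qed
  define F where "F v = (\<Prod>i<n. x (v!i, w!i))" for v
  have "jac n C w (subst_chi chi x) = (\<Sum>u\<in>C. \<Prod>i<n. \<Sum>b\<in>UNIV. chi (u!i * b) * x (b, w!i))"
    by (simp add: jac_alt subst_chi_def)
  also have "\<dots> = (\<Sum>u\<in>C. \<Sum>v\<in>vecs n. \<Prod>i<n. chi (u!i * v!i) * x (v!i, w!i))"
    by (simp add: prod_sum_vecs)
  also have "\<dots> = (\<Sum>u\<in>C. \<Sum>v\<in>vecs n. chi (ip u v) * F v)"
    by (simp add: prod.distrib F_def ip_def chi_sum[OF add z])
  also have "\<dots> = (\<Sum>v\<in>vecs n. F v * (\<Sum>u\<in>C. chi (ip u v)))"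
    by (subst sum.swap) (simp add: sum_distrib_left mult.commute)
  also have "\<dots> = (\<Sum>v\<in>vecs n. (if v \<in> dual_code n C then of_nat (card C) * F v else 0))"
    by (rule sum.cong) (auto simp: orth)
  also have "\<dots> = of_nat (card C) * (\<Sum>v\<in>dual_code n C. F v)"
    by (simp add: sum.If_cases sum_distrib_left dual_code_def Int_def conj_commute)
  finally show ?thesis using cardC by (simp add: jac_alt F_def)
qed



lemma vperm_nth: "i < n \<Longrightarrow> vperm n \<sigma> u ! i = u ! \<sigma> i"
  by (simp add: vperm_def)

lemma vperm_inj:
  assumes s: "\<sigma> permutes {..<n}"
  shows "inj_on (vperm n \<sigma>) (vecs n)"
proof (rule inj_onI)
  fix u v assume uv: "u \<in> vecs n" "v \<in> vecs n" "vperm n \<sigma> u = vperm n \<sigma> v"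
  show "u = v"
  proof (rule nth_equalityI)
    show "length u = length v" using uv by (simp add: vecs_def)
    fix j assume j: "j < length u"
    then have jn: "j < n" using uv by (simp add: vecs_def)
    have ij: "inv_into UNIV \<sigma> j < n" using s jn by (meson lessThan_iff permutes_in_image permutes_inv)
    have "vperm n \<sigma> u ! inv_into UNIV \<sigma> j = vperm n \<sigma> v ! inv_into UNIV \<sigma> j" using uv by simp
    then show "u ! j = v ! j" using ij by (simp add: vperm_nth permutes_inverses[OF s])
  qed
qed

lemma jac_perm:
  assumes s: "\<sigma> permutes {..<n}" and D: "D \<subseteq> vecs n"
  shows "jac n (code_perm n \<sigma> D) w x = jac n D (vperm n (inv_into UNIV \<sigma>) w) x"
proof -
  have inj: "inj_on (vperm n \<sigma>) D" using vperm_inj[OF s] D inj_on_subset by blast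
  have "jac n (code_perm n \<sigma> D) w x = (\<Sum>u\<in>D. \<Prod>i<n. x (vperm n \<sigma> u ! i, w!i))"
    unfolding jac_alt code_perm_def by (simp add: sum.reindex[OF inj])
  also have "\<dots> = (\<Sum>u\<in>D. \<Prod>i<n. x (u ! i, vperm n (inv_into UNIV \<sigma>) w ! i))"
  proof (rule sum.cong[OF refl])
    fix u
    have b: "bij_betw \<sigma> {..<n} {..<n}" using s by (rule permutes_imp_bij)
    have "(\<Prod>i<n. x (u ! i, vperm n (inv_into UNIV \<sigma>) w ! i)) = (\<Prod>i<n. x (u ! \<sigma> i, vperm n (inv_into UNIV \<sigma>) w ! \<sigma> i))"
      using prod.reindex_bij_betw[OF b, of "\<lambda>i. x (u ! i, vperm n (inv_into UNIV \<sigma>) w ! i)"] by simp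
    also have "\<dots> = (\<Prod>i<n. x (vperm n \<sigma> u ! i, w!i))"
    proof (rule prod.cong[OF refl])
      fix i assume i: "i \<in> {..<n}"
      then have "\<sigma> i < n" using s by (meson lessThan_iff permutes_in_image)
      then show "x (u ! \<sigma> i, vperm n (inv_into UNIV \<sigma>) w ! \<sigma> i) = x (vperm n \<sigma> u ! i, w!i)"
        using i by (simp add: vperm_nth permutes_inverses[OF s])
    qed
    finally show "(\<Prod>i<n. x (vperm n \<sigma> u ! i, w!i)) = (\<Prod>i<n. x (u ! i, vperm n (inv_into UNIV \<sigma>) w ! i))" by simp
  qed
  finally show ?thesis by (simp add: jac_alt)
qed

lemma avg:
  assumes h: "\<And>w. jac n D w x = jac n C w y / c" and C: "C \<subseteq> vecs n" and D: "D \<subseteq> vecs n"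
  shows "jac_av n D w x = jac_av n C w y / c"
proof -
  have "(\<Sum>\<sigma> | \<sigma> permutes {..<n}. jac n (code_perm n \<sigma> D) w x)
      = (\<Sum>\<sigma> | \<sigma> permutes {..<n}. jac n (code_perm n \<sigma> C) w y / c)"
    by (rule sum.cong[OF refl]) (simp add: jac_perm C D h)
  then show ?thesis unfolding jac_av_def by (simp add: sum_divide_distrib[symmetric])
qed



lemma pow_mod_root: "(z::complex) ^ p = 1 \<Longrightarrow> z ^ (m mod p) = z ^ m"
proof -
  assume z: "z ^ p = 1"
  have "z ^ m = z ^ (m mod p + p * (m div p))" by simp
  also have "\<dots> = z ^ (m mod p)" by (simp only: power_add power_mult z) simp
  finally show ?thesis by simp
qed

lemma chi_zk_add:
  assumes z: "primitive_root_of_unity CARD('k) \<zeta>"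
  shows "chi_zk \<zeta> (a + b :: 'k::nontriv mod_ring) = chi_zk \<zeta> a * chi_zk \<zeta> b"
proof -
  have r: "\<And>x::'k mod_ring. 0 \<le> to_int_mod_ring x \<and> to_int_mod_ring x < int CARD('k)"
    using range_to_int_mod_ring by (metis atLeastLessThan_iff rangeI)
  have "nat (to_int_mod_ring (a + b)) = (nat (to_int_mod_ring a) + nat (to_int_mod_ring b)) mod CARD('k)"
    unfolding to_int_mod_ring_add using r[of a] r[of b] by (simp add: nat_mod_distrib nat_add_distrib)
  then show ?thesis unfolding chi_zk_def
    using pow_mod_root[of \<zeta> "CARD('k)"] z by (simp add: primitive_root_of_unity_def power_add)
qed

lemma chi_zk_0: "chi_zk \<zeta> (0 :: 'k::nontriv mod_ring) = 1"
  unfolding chi_zk_def by simp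

lemma chi_zk_ne:
  assumes z: "primitive_root_of_unity CARD('k) \<zeta>" and t: "t \<noteq> (0 :: 'k::nontriv mod_ring)"
  shows "chi_zk \<zeta> t \<noteq> 1"
proof -
  have r: "0 \<le> to_int_mod_ring t \<and> to_int_mod_ring t < int CARD('k)"
    using range_to_int_mod_ring by (metis atLeastLessThan_iff rangeI)
  have "to_int_mod_ring t \<noteq> 0" using t by simp
  then have "0 < to_int_mod_ring t" using r by linarith
  then have "0 < nat (to_int_mod_ring t)" "nat (to_int_mod_ring t) < CARD('k)" using r by auto
  then show ?thesis using z unfolding chi_zk_def primitive_root_of_unity_def by blast
qed

lemma zk_part:
  fixes C :: "'k::nontriv mod_ring list set"
  assumes z: "primitive_root_of_unity CARD('k) \<zeta>" and C: "additive_code n C"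
  shows "jac_av n (dual_code n C) w x = jac_av n C w (subst_chi (chi_zk \<zeta>) x) / of_nat (card C)"
proof (rule avg)
  show Cv: "C \<subseteq> vecs n" using C by (simp add: additive_code_def)
  show "dual_code n C \<subseteq> vecs n" by (auto simp: dual_code_def)
  fix w
  show "jac n (dual_code n C) w x = jac n C w (subst_chi (chi_zk \<zeta>) x) / of_nat (card C)"
  proof (rule core)
    show "\<forall>a b::'k mod_ring. chi_zk \<zeta> (a + b) = chi_zk \<zeta> a * chi_zk \<zeta> b" using chi_zk_add[OF z] by blast
    show "chi_zk \<zeta> (0::'k mod_ring) = 1" by (rule chi_zk_0)
    show "C \<subseteq> vecs n" "replicate n 0 \<in> C" "\<forall>u\<in>C. \<forall>v\<in>C. vadd u v \<in> C" "\<forall>u\<in>C. map uminus u \<in> C"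
      using C by (auto simp: additive_code_def)
    show "\<forall>v\<in>vecs n. v \<notin> dual_code n C \<longrightarrow> (\<exists>u\<in>C. chi_zk \<zeta> (\<Sum>i<n. u ! i * v ! i :: 'k mod_ring) \<noteq> 1)"
      using chi_zk_ne[OF z] by (auto simp: dual_code_def)
  qed
qed



definition Fp :: "'a::finite_field set" where "Fp = range of_nat"

lemma Fp_of_nat[simp]: "of_nat j \<in> Fp" by (simp add: Fp_def)
lemma Fp_0[simp]: "0 \<in> Fp" using Fp_of_nat[of 0] by simp
lemma Fp_1[simp]: "1 \<in> Fp" using Fp_of_nat[of 1] by simp
lemma Fp_add: "x \<in> Fp \<Longrightarrow> y \<in> Fp \<Longrightarrow> x + y \<in> Fp"
  by (auto simp: Fp_def simp flip: of_nat_add)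
lemma Fp_mult: "x \<in> Fp \<Longrightarrow> y \<in> Fp \<Longrightarrow> x * y \<in> Fp"
  by (auto simp: Fp_def simp flip: of_nat_mult)
lemma Fp_power: "x \<in> Fp \<Longrightarrow> x ^ k \<in> Fp"
  by (auto simp: Fp_def simp flip: of_nat_power)

lemma of_nat_CHAR_minus_1: "of_nat (CHAR('a) - 1) = (-1 :: 'a::finite_field)"
proof -
  have "of_nat (CHAR('a) - 1) + 1 = (of_nat CHAR('a) :: 'a)"
    using CHAR_pos[where 'a='a] by (metis Suc_diff_1 of_nat_Suc add.commute)
  then show ?thesis by (simp add: eq_neg_iff_add_eq_0)
qed

lemma Fp_uminus: "x \<in> (Fp :: 'a::finite_field set) \<Longrightarrow> - x \<in> Fp"
proof -
  assume "x \<in> Fp"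
  then have "of_nat (CHAR('a) - 1) * x \<in> Fp" by (simp add: Fp_mult)
  then show ?thesis by (metis of_nat_CHAR_minus_1 mult_minus1)
qed

lemma Fp_diff: "x \<in> Fp \<Longrightarrow> y \<in> Fp \<Longrightarrow> x - y \<in> Fp"
  using Fp_add Fp_uminus by (metis diff_conv_add_uminus)

lemma CARD_ge2: "CARD('a::finite_field) \<ge> 2"
proof -
  have "(0::'a) \<noteq> 1" by simp
  then have "card {0::'a, 1} = 2" by simp
  moreover have "card {0::'a, 1} \<le> CARD('a)" by (rule card_mono) auto
  ultimately show ?thesis by simp
qed

lemma inverse_power_ff:
  fixes x :: "'a::finite_field"
  assumes x: "x \<noteq> 0" shows "inverse x = x ^ (CARD('a) - 2)"
proof -
  obtain m where m: "CARD('a) = Suc (Suc m)" using CARD_ge2[where 'a='a]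
    by (metis add_2_eq_Suc le_Suc_ex)
  have "x ^ m * x * x = x ^ CARD('a)" unfolding m by (simp add: mult_ac)
  also have "\<dots> = x" by (rule finite_field_power_card_eq_same)
  finally have "(x ^ m * x) * x = 1 * x" by simp
  then have "x ^ m * x = 1" using x by (rule mult_right_cancel[THEN iffD1, rotated])
  then have "inverse x = x ^ m" using x by (simp add: inverse_unique mult.commute)
  then show ?thesis using m by simp
qed

lemma Fp_inverse: "x \<in> (Fp :: 'a::finite_field set) \<Longrightarrow> inverse x \<in> Fp"
  by (cases "x = 0") (auto simp: inverse_power_ff Fp_power)

lemma Fp_ex: "x \<in> (Fp :: 'a::finite_field set) \<Longrightarrow> \<exists>j<CHAR('a). x = of_nat j"
proof -
  assume "x \<in> Fp"
  then obtain j where "x = of_nat j" by (auto simp: Fp_def)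
  then have "x = of_nat (j mod CHAR('a))" by simp
  then show ?thesis using CHAR_pos[where 'a='a] mod_less_divisor by blast
qed

lemma of_nat_inj_CHAR:
  assumes "a < CHAR('a::finite_field)" "b < CHAR('a)" "(of_nat a :: 'a) = of_nat b"
  shows "a = b"
  using assms by (simp add: of_nat_eq_iff_cong_CHAR cong_def)

lemma Fp_image: "(Fp :: 'a::finite_field set) = of_nat ` {..<CHAR('a)}"
  using Fp_ex by (auto simp: Fp_def)

lemma card_Fp: "card (Fp :: 'a::finite_field set) = CHAR('a)"
proof -
  have "inj_on (of_nat :: nat \<Rightarrow> 'a) {..<CHAR('a)}"
    by (rule inj_onI) (auto intro: of_nat_inj_CHAR)
  then show ?thesis by (simp add: Fp_image card_image)
qed

definition Vs :: "'a::finite_field \<Rightarrow> nat \<Rightarrow> 'a set" where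
  "Vs lam k = {\<Sum>i<k. c i * lam ^ i | c. \<forall>i. c i \<in> Fp}"

lemma Vs_I: "(\<forall>i. c i \<in> Fp) \<Longrightarrow> (\<Sum>i<k. c i * lam ^ i) \<in> Vs lam k"
  unfolding Vs_def by blast

lemma Vs_0: "Vs lam 0 = {0}"
  unfolding Vs_def by (auto intro: exI[of _ "\<lambda>_. 0"])

lemma Vs_zero: "0 \<in> Vs lam k"
  using Vs_I[where c="\<lambda>_. 0" and k=k and lam=lam] by simp

lemma Vs_add: "x \<in> Vs lam k \<Longrightarrow> y \<in> Vs lam k \<Longrightarrow> x + y \<in> Vs lam k"
proof -
  assume "x \<in> Vs lam k" "y \<in> Vs lam k"
  then obtain c d where "\<forall>i. c i \<in> Fp" "\<forall>i. d i \<in> Fp" "x = (\<Sum>i<k. c i * lam ^ i)" "y = (\<Sum>i<k. d i * lam ^ i)"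
    unfolding Vs_def by blast
  then show ?thesis using Vs_I[where c="\<lambda>i. c i + d i" and k=k and lam=lam]
    by (simp add: Fp_add distrib_right sum.distrib)
qed

lemma Vs_smult: "a \<in> Fp \<Longrightarrow> x \<in> Vs lam k \<Longrightarrow> a * x \<in> Vs lam k"
proof -
  assume a: "a \<in> Fp" and "x \<in> Vs lam k"
  then obtain c where "\<forall>i. c i \<in> Fp" "x = (\<Sum>i<k. c i * lam ^ i)"
    unfolding Vs_def by blast
  then show ?thesis using Vs_I[where c="\<lambda>i. a * c i" and k=k and lam=lam] a
    by (simp add: Fp_mult sum_distrib_left mult.assoc)
qed

lemma Vs_diff: "x \<in> Vs lam k \<Longrightarrow> y \<in> Vs lam k \<Longrightarrow> x - y \<in> Vs lam k"
proof -
  assume "x \<in> Vs lam k" "y \<in> Vs lam k"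
  then have "x + (-1) * y \<in> Vs lam k" using Vs_add Vs_smult Fp_uminus[OF Fp_1] by blast
  then show ?thesis by simp
qed

lemma Vs_pow: "i < k \<Longrightarrow> lam ^ i \<in> Vs lam k"
proof -
  assume i: "i < k"
  have "(\<Sum>j<k. (if j = i then 1 else 0) * lam ^ j) = (\<Sum>j<k. if j = i then lam ^ j else 0)"
    by (rule sum.cong) auto
  also have "\<dots> = lam ^ i" using i by (simp add: sum.delta)
  finally have "(\<Sum>j<k. (if j = i then 1 else 0) * lam ^ j) = lam ^ i" .
  then show ?thesis using Vs_I[where c="\<lambda>j. if j = i then 1 else 0" and k=k and lam=lam] by simp
qed

lemma Vs_Suc: "Vs lam (Suc k) = (\<lambda>(v,a). v + a * lam ^ k) ` (Vs lam k \<times> Fp)"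
proof (intro equalityI subsetI)
  fix x assume "x \<in> Vs lam (Suc k)"
  then obtain c where c: "\<forall>i. c i \<in> Fp" "x = (\<Sum>i<Suc k. c i * lam ^ i)"
    unfolding Vs_def by blast
  then have "x = (\<Sum>i<k. c i * lam ^ i) + c k * lam ^ k" by simp
  moreover have "(\<Sum>i<k. c i * lam ^ i) \<in> Vs lam k" by (rule Vs_I[OF c(1)])
  ultimately show "x \<in> (\<lambda>(v,a). v + a * lam ^ k) ` (Vs lam k \<times> Fp)" using c by force
next
  fix x assume "x \<in> (\<lambda>(v,a). v + a * lam ^ k) ` (Vs lam k \<times> Fp)"
  then obtain v a where va: "v \<in> Vs lam k" "a \<in> Fp" "x = v + a * lam ^ k" by auto
  then obtain c where c: "\<forall>i. c i \<in> Fp" "v = (\<Sum>i<k. c i * lam ^ i)"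
    unfolding Vs_def by blast
  have "(\<Sum>i<Suc k. (c(k := a)) i * lam ^ i) = (\<Sum>i<k. (c(k := a)) i * lam ^ i) + a * lam ^ k" by simp
  also have "(\<Sum>i<k. (c(k := a)) i * lam ^ i) = v" unfolding c(2) by (rule sum.cong) auto
  finally have "x = (\<Sum>i<Suc k. (c(k := a)) i * lam ^ i)" using va by simp
  moreover have "\<forall>i. (c(k := a)) i \<in> Fp" using c va by auto
  ultimately show "x \<in> Vs lam (Suc k)" using Vs_I by metis
qed

lemma Vs_lam: "v \<in> Vs lam k \<Longrightarrow> lam * v \<in> Vs lam (Suc k)"
proof -
  assume "v \<in> Vs lam k"
  then obtain c where c: "\<forall>i. c i \<in> Fp" "v = (\<Sum>i<k. c i * lam ^ i)"
    unfolding Vs_def by blast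
  define d where "d j = (if j = 0 then 0 else c (j - 1))" for j
  have "(\<Sum>i<Suc k. d i * lam ^ i) = d 0 * lam ^ 0 + (\<Sum>i<k. d (Suc i) * lam ^ Suc i)"
    by (rule sum.lessThan_Suc_shift)
  also have "\<dots> = lam * v" by (simp add: d_def c(2) sum_distrib_left mult_ac)
  finally show ?thesis using Vs_I[where c=d and k="Suc k" and lam=lam] c(1) by (simp add: d_def)
qed

lemma finite_Vs[simp]: "finite (Vs lam k)" by simp

lemma Vs_card_eq:
  fixes lam :: "'a::finite_field"
  assumes "lam ^ k \<notin> Vs lam k"
  shows "card (Vs lam (Suc k)) = card (Vs lam k) * CHAR('a)"
proof -
  have "inj_on (\<lambda>(v,a). v + a * lam ^ k) (Vs lam k \<times> (Fp :: 'a set))"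
  proof (rule inj_onI, clarsimp)
    fix v a v' a' assume h: "v \<in> Vs lam k" "a \<in> Fp" "v' \<in> Vs lam k" "a' \<in> Fp"
      "v + a * lam ^ k = v' + a' * lam ^ k"
    show "v = v' \<and> a = a'"
    proof (cases "a = a'")
      case True then show ?thesis using h by simp
    next
      case False
      have e: "(a - a') * lam ^ k = v' - v" using h(5) by (simp add: algebra_simps)
      have nz: "a - a' \<noteq> 0" using False by simp
      have "inverse (a - a') * (v' - v) = (inverse (a - a') * (a - a')) * lam ^ k"
        unfolding e[symmetric] by (simp only: mult.assoc)
      then have "lam ^ k = inverse (a - a') * (v' - v)" using nz by simp
      moreover have "inverse (a - a') * (v' - v) \<in> Vs lam k"
        using h by (intro Vs_smult Fp_inverse Fp_diff Vs_diff)
      ultimately show ?thesis using assms by simp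
    qed
  qed
  then show ?thesis unfolding Vs_Suc by (simp add: card_image card_cartesian_product card_Fp)
qed

lemma Vs_full:
  assumes prim: "primitive_element lam" and k: "0 < k" and l: "lam ^ k \<in> Vs lam k"
  shows "Vs lam k = UNIV"
proof -
  have cl: "lam * v \<in> Vs lam k" if "v \<in> Vs lam k" for v
  proof -
    have "lam * v \<in> Vs lam (Suc k)" using Vs_lam[OF that] .
    then obtain v' a where "v' \<in> Vs lam k" "a \<in> Fp" "lam * v = v' + a * lam ^ k"
      unfolding Vs_Suc by auto
    then show ?thesis using l by (simp add: Vs_add Vs_smult)
  qed
  have p: "lam ^ j \<in> Vs lam k" for j
  proof (induction j)
    case 0 then show ?case using Vs_pow[OF k] by simp
  next
    case (Suc j) then show ?case using cl by simp
  qed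
  show ?thesis
  proof (intro equalityI subsetI)
    fix x :: 'a
    show "x \<in> Vs lam k"
      using prim p Vs_zero unfolding primitive_element_def by (cases "x = 0") auto
  qed simp
qed



definition fdeg :: "'a::finite_field \<Rightarrow> nat" where "fdeg lam = (LEAST k. lam ^ k \<in> Vs lam k)"

lemma CHAR_gt1: "1 < CHAR('a::finite_field)"
  using prime_gt_1_nat[OF CHAR_prime] .

lemma Vs_card_le: "card (Vs (lam::'a::finite_field) k) \<le> CARD('a)"
  by (rule card_mono) auto

lemma ex_k: fixes lam :: "'a::finite_field" shows "\<exists>k. lam ^ k \<in> Vs lam k"
proof (rule ccontr)
  assume "\<not> ?thesis"
  then have c: "card (Vs lam k) = CHAR('a) ^ k" for k
    by (induction k) (auto simp: Vs_0 Vs_card_eq)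
  have "CARD('a) < 2 ^ CARD('a)" by (rule less_exp)
  also have "\<dots> \<le> CHAR('a) ^ CARD('a)" using CHAR_gt1[where 'a='a] by (intro power_mono) auto
  also have "\<dots> \<le> CARD('a)" using c[of "CARD('a)"] Vs_card_le[of lam "CARD('a)"] by simp
  finally show False by simp
qed

lemma fdeg_in: "lam ^ fdeg lam \<in> Vs lam (fdeg lam)"
  unfolding fdeg_def using ex_k by (rule LeastI_ex)

lemma fdeg_below: "k < fdeg lam \<Longrightarrow> lam ^ k \<notin> Vs lam k"
  unfolding fdeg_def by (rule not_less_Least)

lemma fdeg_pos: "0 < fdeg (lam::'a::finite_field)"
proof (rule ccontr)
  assume "\<not> 0 < fdeg lam"
  then have "fdeg lam = 0" by simp
  then show False using fdeg_in[of lam] by (simp add: Vs_0)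
qed

lemma card_Vs_below: fixes lam :: "'a::finite_field"
  shows "k \<le> fdeg lam \<Longrightarrow> card (Vs lam k) = CHAR('a) ^ k"
proof (induction k)
  case 0 then show ?case by (simp add: Vs_0)
next
  case (Suc k)
  then have "lam ^ k \<notin> Vs lam k" by (intro fdeg_below) simp
  then show ?case using Suc by (simp add: Vs_card_eq)
qed

lemma Vs_fdeg_UNIV: "primitive_element lam \<Longrightarrow> Vs lam (fdeg lam) = UNIV"
  using Vs_full fdeg_pos fdeg_in by blast

lemma CARD_eq: fixes lam :: "'a::finite_field"
  shows "primitive_element lam \<Longrightarrow> CARD('a) = CHAR('a) ^ fdeg lam"
  using card_Vs_below[of "fdeg lam" lam] Vs_fdeg_UNIV[of lam] by simp

lemma ff_degree_eq: fixes lam :: "'a::finite_field"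
  shows "primitive_element lam \<Longrightarrow> ff_degree TYPE('a) = fdeg lam"
  unfolding ff_degree_def
proof (rule the_equality)
  assume p: "primitive_element lam"
  show "CARD('a) = CHAR('a) ^ fdeg lam" using CARD_eq[OF p] .
  fix f assume "CARD('a) = CHAR('a) ^ f"
  then have "CHAR('a) ^ f = CHAR('a) ^ fdeg lam" using CARD_eq[OF p] by simp
  then show "f = fdeg lam" using CHAR_gt1[where 'a='a] by (simp add: power_inject_exp)
qed

lemma lin_aux:
  assumes h: "(A::'a::comm_ring) + x * L = B + y * L" shows "(y - x) * L = A - B"
proof -
  have "A - B = (A + x * L) - (B + x * L)" by simp
  also have "\<dots> = (B + y * L) - (B + x * L)" using h by simp
  also have "\<dots> = (y - x) * L" by (simp add: algebra_simps)
  finally show ?thesis by simp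
qed

lemma indep: fixes lam :: "'a::finite_field"
  shows "k \<le> fdeg lam \<Longrightarrow> \<forall>i. c i \<in> Fp \<Longrightarrow> \<forall>i. d i \<in> Fp \<Longrightarrow>
    (\<Sum>i<k. c i * lam ^ i) = (\<Sum>i<k. d i * lam ^ i) \<Longrightarrow> \<forall>i<k. c i = d i"
proof (induction k)
  case 0 then show ?case by simp
next
  case (Suc k)
  have eq: "(\<Sum>i<k. c i * lam ^ i) + c k * lam ^ k = (\<Sum>i<k. d i * lam ^ i) + d k * lam ^ k"
    using Suc.prems by simp
  show ?case
  proof (cases "c k = d k")
    case True
    then have "(\<Sum>i<k. c i * lam ^ i) = (\<Sum>i<k. d i * lam ^ i)" using eq by simp
    moreover have "k \<le> fdeg lam" using Suc.prems(1) by simp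
    ultimately have "\<forall>i<k. c i = d i" using Suc.IH Suc.prems(2,3) by blast
    then show ?thesis using True less_Suc_eq by auto
  next
    case False
    define S where "S = (\<Sum>i<k. c i * lam ^ i) - (\<Sum>i<k. d i * lam ^ i)"
    have e: "(d k - c k) * lam ^ k = S" using lin_aux[OF eq] unfolding S_def .
    have nz: "d k - c k \<noteq> 0" using False by simp
    have "inverse (d k - c k) * S = (inverse (d k - c k) * (d k - c k)) * lam ^ k"
      unfolding e[symmetric] by (simp only: mult.assoc)
    then have "lam ^ k = inverse (d k - c k) * S" using nz by simp
    moreover have "inverse (d k - c k) * S \<in> Vs lam k"
      unfolding S_def using Suc.prems
      by (intro Vs_smult Fp_inverse Fp_diff Vs_diff Vs_I) auto
    moreover have "lam ^ k \<notin> Vs lam k" using Suc.prems by (intro fdeg_below) simp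
    ultimately show ?thesis by simp
  qed
qed



definition Pc :: "'a::finite_field \<Rightarrow> 'a \<Rightarrow> (nat \<Rightarrow> nat) \<Rightarrow> bool" where
  "Pc lam \<alpha> c \<longleftrightarrow> (\<forall>i. c i < CHAR('a)) \<and> (\<forall>i\<ge>ff_degree TYPE('a). c i = 0) \<and>
      \<alpha> = (\<Sum>i<ff_degree TYPE('a). of_nat (c i) * lam ^ i)"

lemma coords_unique:
  assumes p: "primitive_element lam" and c: "Pc lam \<alpha> c" and c': "Pc lam \<alpha> c'"
  shows "c = c'"
proof
  fix i
  show "c i = c' i"
  proof (cases "i < fdeg lam")
    case True
    have "\<forall>i<fdeg lam. (of_nat (c i) :: 'a) = of_nat (c' i)"
      using c c' unfolding Pc_def ff_degree_eq[OF p]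
      by (intro indep[where lam=lam]) auto
    then have eq: "(of_nat (c i) :: 'a) = of_nat (c' i)" using True by blast
    have "c i < CHAR('a)" "c' i < CHAR('a)" using c c' unfolding Pc_def by auto
    then show ?thesis using of_nat_inj_CHAR eq by blast
  next
    case False
    then show ?thesis using c c' unfolding Pc_def ff_degree_eq[OF p] by simp
  qed
qed

lemma coords_ex:
  assumes p: "primitive_element lam"
  shows "\<exists>c. Pc lam \<alpha> c"
proof -
  have "\<alpha> \<in> Vs lam (fdeg lam)" using Vs_fdeg_UNIV[OF p] by simp
  then obtain d where d: "\<forall>i. d i \<in> Fp" "\<alpha> = (\<Sum>i<fdeg lam. d i * lam ^ i)"
    unfolding Vs_def by blast
  have "\<forall>i. \<exists>j. j < CHAR('a) \<and> d i = of_nat j" using d(1) Fp_ex by blast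
  then have "\<exists>e. \<forall>i. e i < CHAR('a) \<and> d i = of_nat (e i)" by (rule choice)
  then obtain e where e: "\<forall>i. e i < CHAR('a) \<and> d i = of_nat (e i)" by blast
  define c where "c i = (if i < fdeg lam then e i else 0)" for i
  have "\<alpha> = (\<Sum>i<fdeg lam. of_nat (c i) * lam ^ i)"
    unfolding d(2) by (rule sum.cong) (auto simp: c_def e)
  moreover have "\<forall>i. c i < CHAR('a)" using e CHAR_gt1[where 'a='a] by (auto simp: c_def)
  ultimately have "Pc lam \<alpha> c" unfolding Pc_def ff_degree_eq[OF p] by (auto simp: c_def)
  then show ?thesis by blast
qed

lemma coords_eq:
  assumes p: "primitive_element lam" and c: "Pc lam \<alpha> c"
  shows "ff_coords lam \<alpha> = c"
proof -
  have "(THE c. Pc lam \<alpha> c) = c"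
    by (rule the_equality[where P="Pc lam \<alpha>", OF c]) (rule coords_unique[OF p _ c])
  then show ?thesis unfolding Pc_def ff_coords_def .
qed

lemma chi_ff_add:
  assumes p: "primitive_element lam" and z: "\<zeta> ^ CHAR('a) = 1"
  shows "chi_ff lam \<zeta> (a + b :: 'a::finite_field) = chi_ff lam \<zeta> a * chi_ff lam \<zeta> b"
proof -
  obtain ca cb where ca: "Pc lam a ca" and cb: "Pc lam b cb" using coords_ex[OF p] by blast
  define cc where "cc i = (ca i + cb i) mod CHAR('a)" for i
  have "a + b = (\<Sum>i<fdeg lam. of_nat (ca i) * lam ^ i) + (\<Sum>i<fdeg lam. of_nat (cb i) * lam ^ i)"
    using ca cb unfolding Pc_def ff_degree_eq[OF p] by simp
  also have "\<dots> = (\<Sum>i<fdeg lam. of_nat (cc i) * lam ^ i)"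
    by (simp add: cc_def sum.distrib[symmetric] distrib_right)
  finally have "Pc lam (a + b) cc"
    using ca cb unfolding Pc_def ff_degree_eq[OF p] by (auto simp: cc_def)
  then have "chi_ff lam \<zeta> (a + b) = \<zeta> ^ cc 0" unfolding chi_ff_def using coords_eq[OF p] by simp
  also have "\<dots> = \<zeta> ^ (ca 0 + cb 0)" unfolding cc_def using pow_mod_root[OF z] by simp
  finally show ?thesis unfolding chi_ff_def using coords_eq[OF p ca] coords_eq[OF p cb]
    by (simp add: power_add)
qed

lemma chi_ff_0:
  assumes p: "primitive_element lam"
  shows "chi_ff lam \<zeta> (0 :: 'a::finite_field) = 1"
proof -
  have "Pc lam 0 (\<lambda>_. 0)" unfolding Pc_def using CHAR_gt1[where 'a='a] by simp
  then show ?thesis unfolding chi_ff_def using coords_eq[OF p] by simp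
qed

lemma chi_ff_1:
  assumes p: "primitive_element lam" and z: "primitive_root_of_unity CHAR('a) \<zeta>"
  shows "chi_ff lam \<zeta> (1 :: 'a::finite_field) \<noteq> 1"
proof -
  define c where "c i = (if i = 0 then 1 else 0::nat)" for i :: nat
  have "(\<Sum>i<fdeg lam. of_nat (c i) * lam ^ i) = (\<Sum>i<fdeg lam. if i = 0 then lam ^ i else 0)"
    by (rule sum.cong) (auto simp: c_def)
  also have "\<dots> = 1" using fdeg_pos[of lam] by (simp add: sum.delta)
  finally have "Pc lam 1 c" unfolding Pc_def ff_degree_eq[OF p]
    using CHAR_gt1[where 'a='a] fdeg_pos[of lam] by (auto simp: c_def)
  then have "chi_ff lam \<zeta> 1 = \<zeta>" unfolding chi_ff_def using coords_eq[OF p] by (simp add: c_def)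
  then show ?thesis using z CHAR_gt1[where 'a='a] unfolding primitive_root_of_unity_def by auto
qed



lemma ff_part:
  fixes C :: "'a::finite_field list set"
  assumes p: "primitive_element lam" and z: "primitive_root_of_unity CHAR('a) \<zeta>"
    and C: "linear_code_field n C"
  shows "jac_av n (dual_code n C) w x = jac_av n C w (subst_chi (chi_ff lam \<zeta>) x) / of_nat (card C)"
proof (rule avg)
  show Cv: "C \<subseteq> vecs n" using C by (simp add: linear_code_field_def)
  show "dual_code n C \<subseteq> vecs n" by (auto simp: dual_code_def)
  have zp: "\<zeta> ^ CHAR('a) = 1" using z by (simp add: primitive_root_of_unity_def)
  fix w
  show "jac n (dual_code n C) w x = jac n C w (subst_chi (chi_ff lam \<zeta>) x) / of_nat (card C)"
  proof (rule core)
    show "\<forall>a b::'a. chi_ff lam \<zeta> (a + b) = chi_ff lam \<zeta> a * chi_ff lam \<zeta> b"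
      using chi_ff_add[OF p zp] by blast
    show "chi_ff lam \<zeta> (0::'a) = 1" by (rule chi_ff_0[OF p])
    show "C \<subseteq> vecs n" "replicate n 0 \<in> C" "\<forall>u\<in>C. \<forall>v\<in>C. vadd u v \<in> C"
      using C by (auto simp: linear_code_field_def)
    show "\<forall>u\<in>C. map uminus u \<in> C"
    proof
      fix u assume "u \<in> C"
      then have "vsmult (-1) u \<in> C" using C by (auto simp: linear_code_field_def)
      moreover have "vsmult (-1) u = map uminus u" by (simp add: vsmult_def)
      ultimately show "map uminus u \<in> C" by simp
    qed
    show "\<forall>v\<in>vecs n. v \<notin> dual_code n C \<longrightarrow> (\<exists>u\<in>C. chi_ff lam \<zeta> (\<Sum>i<n. u ! i * v ! i :: 'a) \<noteq> 1)"
    proof (intro ballI impI)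
      fix v assume v: "v \<in> vecs n" "v \<notin> dual_code n C"
      then obtain u where u: "u \<in> C" "(\<Sum>i<n. u ! i * v ! i) \<noteq> 0" by (auto simp: dual_code_def)
      define t where "t = (\<Sum>i<n. u ! i * v ! i)"
      have lu: "length u = n" using u Cv by (auto simp: vecs_def)
      have u0: "vsmult (inverse t) u \<in> C" using u C by (auto simp: linear_code_field_def)
      have "(\<Sum>i<n. vsmult (inverse t) u ! i * v ! i) = (\<Sum>i<n. inverse t * (u ! i * v ! i))"
        by (rule sum.cong) (auto simp: vsmult_def lu mult.assoc)
      also have "\<dots> = inverse t * t" by (simp add: t_def sum_distrib_left)
      also have "\<dots> = 1" using u(2) by (simp add: t_def)
      finally show "\<exists>u\<in>C. chi_ff lam \<zeta> (\<Sum>i<n. u ! i * v ! i) \<noteq> 1"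
        using u0 chi_ff_1[OF p z] by metis
    qed
  qed
qed

theorem mainTheorem4:
  shows
  "(\<forall>(lam::'a::finite_field) \<zeta> n (C::'a list set) w (x::'a \<times> 'a \<Rightarrow> complex).
      primitive_element lam \<longrightarrow> primitive_root_of_unity CHAR('a) \<zeta> \<longrightarrow>
      linear_code_field n C \<longrightarrow> w \<in> vecs n \<longrightarrow>
      jac_av n (dual_code n C) w x =
        jac_av n C w (subst_chi (chi_ff lam \<zeta>) x) / of_nat (card C))
   \<and>
   (\<forall>\<zeta> n (C::'k::nontriv mod_ring list set) w (x::'k mod_ring \<times> 'k mod_ring \<Rightarrow> complex).
      primitive_root_of_unity CARD('k) \<zeta> \<longrightarrow>
      additive_code n C \<longrightarrow> w \<in> vecs n \<longrightarrow>
      jac_av n (dual_code n C) w x =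
        jac_av n C w (subst_chi (chi_zk \<zeta>) x) / of_nat (card C))"
  using ff_part zk_part by blast


end
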